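(* In the game described in the context, suppose the SSP Game Model Assumption holds, and let $\mu\in\Pi_1^{SD}$, $\nu\in\Pi_2^{SD}$. Then: (i) if there exists $x\in\mathbb{R}^n$ with $x\ge T_\mu x$, then $\mu$ is essentially proper; (ii) if there exists $x\in\mathbb{R}^n$ with $x\le\tilde T_\nu x$, then $\nu$ is essentially proper. Moreover, the policies $\bar\mu$ and $\bar\nu$ from parts (i) and (ii) of the SSP Game Model Assumption are essentially proper (so each player has at least one essentially proper stationary deterministic policy).
   Context: Game model. $S=\{1,\dots,n\}$, $S_o=S\cup\{0\}$, $0$ an absorbing cost-free termination state. At $i\in S$ player I picks $\bar u\in\bar U(i)$, player II picks $\bar v\in\bar V(i)$ ($\bar U(i),\bar V(i)$ compact subsets of complete separable metric spaces); expected cost $c_i(\bar u,\bar v)\in\mathbb{R}$ to player I, transition to $j\in S_o$ w.p. $p_{ij}(\bar u,\bar v)$. Standing assumption: $p_{ij}$ continuous on $\bar U(i)\times\bar V(i)$, and $c_i$ lower semicontinuous in $\bar u$ for fixed $\bar v$, upper semicontinuous in $\bar v$ for fixed $\bar u$. $x_i(\pi_1,\pi_2)=\liminf_{t\to\infty}E_{\pi_1\pi_2}[\sum_{k=0}^tc_{i_k}(\bar u_k,\bar v_k)\mid i_0=i]$. $\Pi_1^{SD}=\{\mu:\mu(i)\in\bar U(i)\}$, $\Pi_2^{SD}=\{\nu:\nu(i)\in\bar V(i)\}$; $T_{\mu\nu}x=c(\mu,\nu)+P(\mu,\nu)x$ with $c(\mu,\nu)_i=c_i(\mu(i),\nu(i))$,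 $P(\mu,\nu)_{ij}=p_{ij}(\mu(i),\nu(i))$, $i,j\in S$; $T_\mu x=\sup_{\nu\in\Pi_2^{SD}}T_{\mu\nu}x$, $\tilde T_\nu x=\inf_{\mu\in\Pi_1^{SD}}T_{\mu\nu}x$ (componentwise). Prolonging pair: for some initial state the termination state is with positive probability never reached; otherwise non-prolonging. SSP Game Model Assumption: (i) there is $\bar\mu\in\Pi_1^{SD}$ with $x_i(\bar\mu,\nu)<+\infty$ for all $\nu\in\Pi_2^{SD}$ and all $i$; (ii) there is $\bar\nu\in\Pi_2^{SD}$ with $x_i(\mu,\bar\nu)>-\infty$ for all $\mu\in\Pi_1^{SD}$ and all $i$; (iii) every prolonging pair $(\mu,\nu)\in\Pi_1^{SD}\times\Pi_2^{SD}$ has $x_i(\mu,\nu)\in\{+\infty,-\infty\}$ for some $i$. Essentially proper: $\mu$ is essentially proper if some $\nu$ makes $(\mu,\nu)$ non-prolonging and every $\nu$ with $(\mu,\nu)$ prolonging has $x_i(\mu,\nu)=-\infty$ for some $i$; $\nu$ is essentially proper if some $\mu$ makes $(\mu,\nu)$ non-prolonging and every $\mu$ with $(\mu,\nu)$ prolonging has $x_i(\mu,\nu)=+\infty$ for some $i$. *)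

theory Defs
  imports "HOL-Analysis.Analysis" "HOL-Library.Extended_Real"
begin

(* States: S = UNIV :: 's set (finite, |S| = n). The termination state 0 is None :: 's option,
   so S_o = UNIV :: 's option set and state j in S is Some j. *)

definition lsc_on :: "'a::topological_space set \<Rightarrow> ('a \<Rightarrow> real) \<Rightarrow> bool" where
  "lsc_on A f \<longleftrightarrow> (\<forall>x\<in>A. \<forall>e>0. \<forall>\<^sub>F y in at x within A. f x - e < f y)"

definition usc_on :: "'a::topological_space set \<Rightarrow> ('a \<Rightarrow> real) \<Rightarrow> bool" where
  "usc_on A f \<longleftrightarrow> (\<forall>x\<in>A. \<forall>e>0. \<forall>\<^sub>F y in at x within A. f y < f x + e)"

definition game_model ::
  "('s::finite \<Rightarrow> 'u::polish_space set) \<Rightarrow> ('s \<Rightarrow> 'v::polish_space set)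
   \<Rightarrow> ('s \<Rightarrow> 'u \<Rightarrow> 'v \<Rightarrow> real) \<Rightarrow> ('s \<Rightarrow> 's option \<Rightarrow> 'u \<Rightarrow> 'v \<Rightarrow> real) \<Rightarrow> bool" where
  "game_model U V c p \<longleftrightarrow>
     (\<forall>i. compact (U i) \<and> compact (V i)) \<and>
     (\<forall>i j u v. u \<in> U i \<longrightarrow> v \<in> V i \<longrightarrow> 0 \<le> p i j u v) \<and>
     (\<forall>i u v. u \<in> U i \<longrightarrow> v \<in> V i \<longrightarrow> (\<Sum>j\<in>UNIV. p i j u v) = 1) \<and>
     (\<forall>i j. continuous_on (U i \<times> V i) (\<lambda>(u, v). p i j u v)) \<and>
     (\<forall>i. \<forall>v\<in>V i. lsc_on (U i) (\<lambda>u. c i u v)) \<and>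
     (\<forall>i. \<forall>u\<in>U i. usc_on (V i) (\<lambda>v. c i u v))"

definition Pi1 :: "('s \<Rightarrow> 'u set) \<Rightarrow> ('s \<Rightarrow> 'u) set" where
  "Pi1 U = {\<mu>. \<forall>i. \<mu> i \<in> U i}"

definition Pi2 :: "('s \<Rightarrow> 'v set) \<Rightarrow> ('s \<Rightarrow> 'v) set" where
  "Pi2 V = {\<nu>. \<forall>i. \<nu> i \<in> V i}"

(* k-step transition probabilities of the stationary pair (mu,nu) among the states of S
   (the termination state 0 is absorbing and cost-free) *)
fun Pk :: "('s::finite \<Rightarrow> 's option \<Rightarrow> 'u \<Rightarrow> 'v \<Rightarrow> real) \<Rightarrow> ('s \<Rightarrow> 'u) \<Rightarrow> ('s \<Rightarrow> 'v)
           \<Rightarrow> nat \<Rightarrow> 's \<Rightarrow> 's \<Rightarrow> real" where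
  "Pk p \<mu> \<nu> 0 i j = (if i = j then 1 else 0)"
| "Pk p \<mu> \<nu> (Suc k) i j = (\<Sum>l\<in>UNIV. Pk p \<mu> \<nu> k i l * p l (Some j) (\<mu> l) (\<nu> l))"

definition cost ::
  "('s::finite \<Rightarrow> 'u \<Rightarrow> 'v \<Rightarrow> real) \<Rightarrow> ('s \<Rightarrow> 's option \<Rightarrow> 'u \<Rightarrow> 'v \<Rightarrow> real)
   \<Rightarrow> ('s \<Rightarrow> 'u) \<Rightarrow> ('s \<Rightarrow> 'v) \<Rightarrow> 's \<Rightarrow> ereal" where
  "cost c p \<mu> \<nu> i =
     liminf (\<lambda>t. ereal (\<Sum>k\<le>t. \<Sum>j\<in>UNIV. Pk p \<mu> \<nu> k i j * c j (\<mu> j) (\<nu> j)))"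

(* Probability, starting from i, that the termination state is never reached:
   P(i_k \<in> S for all k) = lim_k P(i_k \<in> S) = inf_k P(i_k \<in> S) (decreasing events) *)
definition never_term_prob ::
  "('s::finite \<Rightarrow> 's option \<Rightarrow> 'u \<Rightarrow> 'v \<Rightarrow> real) \<Rightarrow> ('s \<Rightarrow> 'u) \<Rightarrow> ('s \<Rightarrow> 'v) \<Rightarrow> 's \<Rightarrow> real" where
  "never_term_prob p \<mu> \<nu> i = (INF k. \<Sum>j\<in>UNIV. Pk p \<mu> \<nu> k i j)"

definition prolonging ::
  "('s::finite \<Rightarrow> 's option \<Rightarrow> 'u \<Rightarrow> 'v \<Rightarrow> real) \<Rightarrow> ('s \<Rightarrow> 'u) \<Rightarrow> ('s \<Rightarrow> 'v) \<Rightarrow> bool" where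
  "prolonging p \<mu> \<nu> \<longleftrightarrow> (\<exists>i. never_term_prob p \<mu> \<nu> i > 0)"

definition Tmn ::
  "('s::finite \<Rightarrow> 'u \<Rightarrow> 'v \<Rightarrow> real) \<Rightarrow> ('s \<Rightarrow> 's option \<Rightarrow> 'u \<Rightarrow> 'v \<Rightarrow> real)
   \<Rightarrow> ('s \<Rightarrow> 'u) \<Rightarrow> ('s \<Rightarrow> 'v) \<Rightarrow> ('s \<Rightarrow> real) \<Rightarrow> 's \<Rightarrow> real" where
  "Tmn c p \<mu> \<nu> x i = c i (\<mu> i) (\<nu> i) + (\<Sum>j\<in>UNIV. p i (Some j) (\<mu> i) (\<nu> i) * x j)"

definition Tmu where
  "Tmu V c p \<mu> x i = (SUP \<nu>\<in>Pi2 V. ereal (Tmn c p \<mu> \<nu> x i))"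

definition Tnu where
  "Tnu U c p \<nu> x i = (INF \<mu>\<in>Pi1 U. ereal (Tmn c p \<mu> \<nu> x i))"

definition ssp_assumption where
  "ssp_assumption U V c p \<mu>b \<nu>b \<longleftrightarrow>
     \<mu>b \<in> Pi1 U \<and> (\<forall>\<nu>\<in>Pi2 V. \<forall>i. cost c p \<mu>b \<nu> i < \<infinity>) \<and>
     \<nu>b \<in> Pi2 V \<and> (\<forall>\<mu>\<in>Pi1 U. \<forall>i. cost c p \<mu> \<nu>b i > -\<infinity>) \<and>
     (\<forall>\<mu>\<in>Pi1 U. \<forall>\<nu>\<in>Pi2 V. prolonging p \<mu> \<nu> \<longrightarrow>
        (\<exists>i. cost c p \<mu> \<nu> i = \<infinity> \<or> cost c p \<mu> \<nu> i = -\<infinity>))"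

definition ess_proper1 where
  "ess_proper1 U V c p \<mu> \<longleftrightarrow>
     (\<exists>\<nu>\<in>Pi2 V. \<not> prolonging p \<mu> \<nu>) \<and>
     (\<forall>\<nu>\<in>Pi2 V. prolonging p \<mu> \<nu> \<longrightarrow> (\<exists>i. cost c p \<mu> \<nu> i = -\<infinity>))"

definition ess_proper2 where
  "ess_proper2 U V c p \<nu> \<longleftrightarrow>
     (\<exists>\<mu>\<in>Pi1 U. \<not> prolonging p \<mu> \<nu>) \<and>
     (\<forall>\<mu>\<in>Pi1 U. prolonging p \<mu> \<nu> \<longrightarrow> (\<exists>i. cost c p \<mu> \<nu> i = \<infinity>))"

end

theory Submission
  imports Defs
begin

lemma sum_option_UNIV:
  fixes f :: "'a::finite option \<Rightarrow> real"
  shows "(\<Sum>j\<in>UNIV. f j) = f None + (\<Sum>j\<in>UNIV. f (Some j))"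
proof -
  have U: "(UNIV :: 'a option set) = insert None (range Some)"
    by (auto intro: option.exhaust)
  have "(\<Sum>j\<in>UNIV. f j) = f None + sum f (range Some)"
    unfolding U by (subst sum.insert) auto
  also have "sum f (range Some) = (\<Sum>j\<in>UNIV. f (Some j))"
    by (subst sum.reindex) (auto simp: inj_def)
  finally show ?thesis .
qed

lemma Pk1: "Pk p \<mu> \<nu> (Suc 0) i j = p i (Some j) (\<mu> i) (\<nu> i)"
proof -
  have "(\<Sum>l\<in>UNIV. Pk p \<mu> \<nu> 0 i l * p l (Some j) (\<mu> l) (\<nu> l)) = (\<Sum>l\<in>UNIV. if i = l then p l (Some j) (\<mu> l) (\<nu> l) else 0)"
    by (rule sum.cong) auto
  then show ?thesis by simp
qed

lemma Pk0_sum: "(\<Sum>j\<in>UNIV. Pk p \<mu> \<nu> 0 i j * f j) = f i"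
proof -
  have "(\<Sum>j\<in>UNIV. Pk p \<mu> \<nu> 0 i j * f j) = (\<Sum>j\<in>UNIV. if i = j then f j else 0)"
    by (rule sum.cong) auto
  then show ?thesis by simp
qed

lemma Pk_nonneg:
  assumes "\<forall>l j. 0 \<le> p l (Some j) (\<mu> l) (\<nu> l)"
  shows "0 \<le> Pk p \<mu> \<nu> k i j"
  using assms by (induction k arbitrary: j) (auto intro!: sum_nonneg)

lemma Pk_sum_le1:
  fixes p :: "'s::finite \<Rightarrow> 's option \<Rightarrow> 'u \<Rightarrow> 'v \<Rightarrow> real"
  assumes nn: "\<forall>l j. 0 \<le> p l (Some j) (\<mu> l) (\<nu> l)"
    and row: "\<forall>l. (\<Sum>j\<in>UNIV. p l (Some j) (\<mu> l) (\<nu> l)) \<le> 1"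
  shows "(\<Sum>j\<in>UNIV. Pk p \<mu> \<nu> k i j) \<le> 1"
proof (induction k)
  case 0
  then show ?case by simp
next
  case (Suc k)
  have "(\<Sum>j\<in>UNIV. Pk p \<mu> \<nu> (Suc k) i j)
      = (\<Sum>l\<in>UNIV. Pk p \<mu> \<nu> k i l * (\<Sum>j\<in>UNIV. p l (Some j) (\<mu> l) (\<nu> l)))"
    by (simp add: sum_distrib_left) (rule sum.swap)
  also have "\<dots> \<le> (\<Sum>l\<in>UNIV. Pk p \<mu> \<nu> k i l)"
    by (rule sum_mono) (simp add: Pk_nonneg[of p \<mu> \<nu>, OF nn] mult_left_le row)
  also have "\<dots> \<le> 1" by (rule Suc)
  finally show ?case .
qed

lemma Pk_le1:
  fixes p :: "'s::finite \<Rightarrow> 's option \<Rightarrow> 'u \<Rightarrow> 'v \<Rightarrow> real"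
  assumes nn: "\<forall>l j. 0 \<le> p l (Some j) (\<mu> l) (\<nu> l)"
    and row: "\<forall>l. (\<Sum>j\<in>UNIV. p l (Some j) (\<mu> l) (\<nu> l)) \<le> 1"
  shows "Pk p \<mu> \<nu> k i j \<le> 1"
proof -
  have "Pk p \<mu> \<nu> k i j \<le> (\<Sum>j\<in>UNIV. Pk p \<mu> \<nu> k i j)"
    by (rule member_le_sum) (auto simp: Pk_nonneg[of p \<mu> \<nu>, OF nn])
  also have "\<dots> \<le> 1" by (rule Pk_sum_le1[of p \<mu> \<nu>, OF nn row])
  finally show ?thesis .
qed

lemma Pk_step:
  "(\<Sum>l\<in>UNIV. Pk p \<mu> \<nu> (Suc (Suc t)) i l * x l)
   = (\<Sum>j\<in>UNIV. Pk p \<mu> \<nu> (Suc t) i j * (\<Sum>l\<in>UNIV. p j (Some l) (\<mu> j) (\<nu> j) * x l))"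
proof -
  have "(\<Sum>l\<in>UNIV. Pk p \<mu> \<nu> (Suc (Suc t)) i l * x l)
      = (\<Sum>l\<in>UNIV. \<Sum>j\<in>UNIV. Pk p \<mu> \<nu> (Suc t) i j * p j (Some l) (\<mu> j) (\<nu> j) * x l)"
    by (simp only: Pk.simps sum_distrib_right)
  also have "\<dots> = (\<Sum>j\<in>UNIV. \<Sum>l\<in>UNIV. Pk p \<mu> \<nu> (Suc t) i j * p j (Some l) (\<mu> j) (\<nu> j) * x l)"
    by (rule sum.swap)
  also have "\<dots> = (\<Sum>j\<in>UNIV. Pk p \<mu> \<nu> (Suc t) i j * (\<Sum>l\<in>UNIV. p j (Some l) (\<mu> j) (\<nu> j) * x l))"
    by (simp add: sum_distrib_left mult.assoc)
  finally show ?thesis .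
qed

lemma iter_le:
  fixes p :: "'s::finite \<Rightarrow> 's option \<Rightarrow> 'u \<Rightarrow> 'v \<Rightarrow> real"
  assumes nn: "\<forall>l j. 0 \<le> p l (Some j) (\<mu> l) (\<nu> l)"
    and T: "\<forall>i. Tmn c p \<mu> \<nu> x i \<le> x i"
  shows "(\<Sum>k\<le>t. \<Sum>j\<in>UNIV. Pk p \<mu> \<nu> k i j * c j (\<mu> j) (\<nu> j))
         + (\<Sum>j\<in>UNIV. Pk p \<mu> \<nu> (Suc t) i j * x j) \<le> x i"
proof (induction t)
  case 0
  have e1: "(\<Sum>j\<in>UNIV. Pk p \<mu> \<nu> (Suc 0) i j * x j) = (\<Sum>j\<in>UNIV. p i (Some j) (\<mu> i) (\<nu> i) * x j)"
    by (simp only: Pk1)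
  show ?case using T[rule_format, of i] e1 by (simp add: Tmn_def Pk0_sum del: Pk.simps)
next
  case (Suc t)
  let ?S = "\<lambda>t. (\<Sum>k\<le>t. \<Sum>j\<in>UNIV. Pk p \<mu> \<nu> k i j * c j (\<mu> j) (\<nu> j))"
  have "?S (Suc t) + (\<Sum>l\<in>UNIV. Pk p \<mu> \<nu> (Suc (Suc t)) i l * x l)
      = ?S t + (\<Sum>j\<in>UNIV. Pk p \<mu> \<nu> (Suc t) i j * Tmn c p \<mu> \<nu> x j)"
    by (simp add: Pk_step[of p \<mu> \<nu> t i x] Tmn_def distrib_left sum.distrib del: Pk.simps)
  also have "\<dots> \<le> ?S t + (\<Sum>j\<in>UNIV. Pk p \<mu> \<nu> (Suc t) i j * x j)"
    using T by (auto intro!: sum_mono mult_left_mono simp: Pk_nonneg[of p \<mu> \<nu>, OF nn] simp del: Pk.simps)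
  also have "\<dots> \<le> x i" by (rule Suc)
  finally show ?case .
qed

lemma iter_ge:
  fixes p :: "'s::finite \<Rightarrow> 's option \<Rightarrow> 'u \<Rightarrow> 'v \<Rightarrow> real"
  assumes nn: "\<forall>l j. 0 \<le> p l (Some j) (\<mu> l) (\<nu> l)"
    and T: "\<forall>i. x i \<le> Tmn c p \<mu> \<nu> x i"
  shows "x i \<le> (\<Sum>k\<le>t. \<Sum>j\<in>UNIV. Pk p \<mu> \<nu> k i j * c j (\<mu> j) (\<nu> j))
         + (\<Sum>j\<in>UNIV. Pk p \<mu> \<nu> (Suc t) i j * x j)"
proof (induction t)
  case 0
  have e1: "(\<Sum>j\<in>UNIV. Pk p \<mu> \<nu> (Suc 0) i j * x j) = (\<Sum>j\<in>UNIV. p i (Some j) (\<mu> i) (\<nu> i) * x j)"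
    by (simp only: Pk1)
  show ?case using T[rule_format, of i] e1 by (simp add: Tmn_def Pk0_sum del: Pk.simps)
next
  case (Suc t)
  let ?S = "\<lambda>t. (\<Sum>k\<le>t. \<Sum>j\<in>UNIV. Pk p \<mu> \<nu> k i j * c j (\<mu> j) (\<nu> j))"
  have "?S (Suc t) + (\<Sum>l\<in>UNIV. Pk p \<mu> \<nu> (Suc (Suc t)) i l * x l)
      = ?S t + (\<Sum>j\<in>UNIV. Pk p \<mu> \<nu> (Suc t) i j * Tmn c p \<mu> \<nu> x j)"
    by (simp add: Pk_step[of p \<mu> \<nu> t i x] Tmn_def distrib_left sum.distrib del: Pk.simps)
  moreover have "?S t + (\<Sum>j\<in>UNIV. Pk p \<mu> \<nu> (Suc t) i j * x j) \<le> \<dots>"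
    using T by (auto intro!: sum_mono mult_left_mono simp: Pk_nonneg[of p \<mu> \<nu>, OF nn] simp del: Pk.simps)
  moreover have "x i \<le> ?S t + (\<Sum>j\<in>UNIV. Pk p \<mu> \<nu> (Suc t) i j * x j)" by (rule Suc)
  ultimately show ?case by linarith
qed


lemma Pk_x_abs:
  fixes p :: "'s::finite \<Rightarrow> 's option \<Rightarrow> 'u \<Rightarrow> 'v \<Rightarrow> real"
  assumes nn: "\<forall>l j. 0 \<le> p l (Some j) (\<mu> l) (\<nu> l)"
    and row: "\<forall>l. (\<Sum>j\<in>UNIV. p l (Some j) (\<mu> l) (\<nu> l)) \<le> 1"
  shows "\<bar>\<Sum>j\<in>UNIV. Pk p \<mu> \<nu> k i j * x j\<bar> \<le> (\<Sum>j\<in>UNIV. \<bar>x j\<bar>)"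
proof -
  have "\<bar>\<Sum>j\<in>UNIV. Pk p \<mu> \<nu> k i j * x j\<bar> \<le> (\<Sum>j\<in>UNIV. \<bar>Pk p \<mu> \<nu> k i j * x j\<bar>)"
    by (rule sum_abs)
  also have "\<dots> \<le> (\<Sum>j\<in>UNIV. \<bar>x j\<bar>)"
  proof (rule sum_mono)
    fix j
    have a: "0 \<le> Pk p \<mu> \<nu> k i j" "Pk p \<mu> \<nu> k i j \<le> 1"
      using Pk_nonneg[of p \<mu> \<nu>, OF nn] Pk_le1[of p \<mu> \<nu>, OF nn row] by auto
    show "\<bar>Pk p \<mu> \<nu> k i j * x j\<bar> \<le> \<bar>x j\<bar>"
      using a by (simp add: abs_mult mult_left_le_one_le)
  qed
  finally show ?thesis .
qed

lemma cost_lt: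
  fixes p :: "'s::finite \<Rightarrow> 's option \<Rightarrow> 'u \<Rightarrow> 'v \<Rightarrow> real"
  assumes nn: "\<forall>l j. 0 \<le> p l (Some j) (\<mu> l) (\<nu> l)"
    and row: "\<forall>l. (\<Sum>j\<in>UNIV. p l (Some j) (\<mu> l) (\<nu> l)) \<le> 1"
    and T: "\<forall>i. Tmn c p \<mu> \<nu> x i \<le> x i"
  shows "cost c p \<mu> \<nu> i < \<infinity>"
proof -
  let ?K = "x i + (\<Sum>j\<in>UNIV. \<bar>x j\<bar>)"
  have b: "(\<Sum>k\<le>t. \<Sum>j\<in>UNIV. Pk p \<mu> \<nu> k i j * c j (\<mu> j) (\<nu> j)) \<le> ?K" for t
  proof -
    have "(\<Sum>k\<le>t. \<Sum>j\<in>UNIV. Pk p \<mu> \<nu> k i j * c j (\<mu> j) (\<nu> j)) + (\<Sum>j\<in>UNIV. Pk p \<mu> \<nu> (Suc t) i j * x j) \<le> x i"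
      by (rule iter_le[where t=t and i=i, OF nn T])
    moreover have "\<bar>\<Sum>j\<in>UNIV. Pk p \<mu> \<nu> (Suc t) i j * x j\<bar> \<le> (\<Sum>j\<in>UNIV. \<bar>x j\<bar>)"
      by (rule Pk_x_abs[where p=p and \<mu>=\<mu> and \<nu>=\<nu>, OF nn row])
    ultimately show ?thesis by linarith
  qed
  have "cost c p \<mu> \<nu> i \<le> limsup (\<lambda>t. ereal (\<Sum>k\<le>t. \<Sum>j\<in>UNIV. Pk p \<mu> \<nu> k i j * c j (\<mu> j) (\<nu> j)))"
    unfolding cost_def by (rule Liminf_le_Limsup) simp
  also have "\<dots> \<le> ereal ?K"
    by (rule Limsup_bounded) (use b in auto)
  finally show ?thesis by (cases "cost c p \<mu> \<nu> i") auto
qed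

lemma cost_gt:
  fixes p :: "'s::finite \<Rightarrow> 's option \<Rightarrow> 'u \<Rightarrow> 'v \<Rightarrow> real"
  assumes nn: "\<forall>l j. 0 \<le> p l (Some j) (\<mu> l) (\<nu> l)"
    and row: "\<forall>l. (\<Sum>j\<in>UNIV. p l (Some j) (\<mu> l) (\<nu> l)) \<le> 1"
    and T: "\<forall>i. x i \<le> Tmn c p \<mu> \<nu> x i"
  shows "cost c p \<mu> \<nu> i > -\<infinity>"
proof -
  let ?K = "x i - (\<Sum>j\<in>UNIV. \<bar>x j\<bar>)"
  have b: "?K \<le> (\<Sum>k\<le>t. \<Sum>j\<in>UNIV. Pk p \<mu> \<nu> k i j * c j (\<mu> j) (\<nu> j))" for t
  proof -
    have "x i \<le> (\<Sum>k\<le>t. \<Sum>j\<in>UNIV. Pk p \<mu> \<nu> k i j * c j (\<mu> j) (\<nu> j)) + (\<Sum>j\<in>UNIV. Pk p \<mu> \<nu> (Suc t) i j * x j)"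
      by (rule iter_ge[where t=t and i=i, OF nn T])
    moreover have "\<bar>\<Sum>j\<in>UNIV. Pk p \<mu> \<nu> (Suc t) i j * x j\<bar> \<le> (\<Sum>j\<in>UNIV. \<bar>x j\<bar>)"
      by (rule Pk_x_abs[where p=p and \<mu>=\<mu> and \<nu>=\<nu>, OF nn row])
    ultimately show ?thesis by linarith
  qed
  have "ereal ?K \<le> cost c p \<mu> \<nu> i"
    unfolding cost_def by (rule Liminf_bounded) (use b in auto)
  then show ?thesis by (cases "cost c p \<mu> \<nu> i") auto
qed


lemma model_nn_row:
  fixes p :: "'s::finite \<Rightarrow> 's option \<Rightarrow> 'u::polish_space \<Rightarrow> 'v::polish_space \<Rightarrow> real"
  assumes gm: "game_model U V c p" and m: "\<mu> \<in> Pi1 U" and n: "\<nu> \<in> Pi2 V"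
  shows "\<forall>l j. 0 \<le> p l (Some j) (\<mu> l) (\<nu> l)"
    and "\<forall>l. (\<Sum>j\<in>UNIV. p l (Some j) (\<mu> l) (\<nu> l)) \<le> 1"
proof -
  have mu: "\<mu> l \<in> U l" and nu: "\<nu> l \<in> V l" for l using m n by (auto simp: Pi1_def Pi2_def)
  show "\<forall>l j. 0 \<le> p l (Some j) (\<mu> l) (\<nu> l)"
    using gm mu nu by (auto simp: game_model_def)
  show "\<forall>l. (\<Sum>j\<in>UNIV. p l (Some j) (\<mu> l) (\<nu> l)) \<le> 1"
  proof
    fix l
    have "(\<Sum>j\<in>UNIV. p l j (\<mu> l) (\<nu> l)) = 1" "0 \<le> p l None (\<mu> l) (\<nu> l)"
      using gm mu[of l] nu[of l] by (auto simp: game_model_def)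
    then show "(\<Sum>j\<in>UNIV. p l (Some j) (\<mu> l) (\<nu> l)) \<le> 1"
      using sum_option_UNIV[of "\<lambda>j. p l j (\<mu> l) (\<nu> l)"] by linarith
  qed
qed

lemma ess1:
  assumes ssp: "ssp_assumption U V c p \<mu>b \<nu>b" and m: "\<mu> \<in> Pi1 U"
    and fin: "\<forall>\<nu>\<in>Pi2 V. \<forall>i. cost c p \<mu> \<nu> i < \<infinity>"
  shows "ess_proper1 U V c p \<mu>"
  unfolding ess_proper1_def
proof
  have nb: "\<nu>b \<in> Pi2 V" using ssp by (simp add: ssp_assumption_def)
  have "\<not> prolonging p \<mu> \<nu>b"
  proof
    assume "prolonging p \<mu> \<nu>b"
    then obtain i where "cost c p \<mu> \<nu>b i = \<infinity> \<or> cost c p \<mu> \<nu>b i = -\<infinity>"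
      using ssp m nb unfolding ssp_assumption_def by blast
    moreover have "cost c p \<mu> \<nu>b i > -\<infinity>" using ssp m unfolding ssp_assumption_def by blast
    moreover have "cost c p \<mu> \<nu>b i < \<infinity>" using fin nb by blast
    ultimately show False by auto
  qed
  then show "\<exists>\<nu>\<in>Pi2 V. \<not> prolonging p \<mu> \<nu>" using nb by blast
next
  show "\<forall>\<nu>\<in>Pi2 V. prolonging p \<mu> \<nu> \<longrightarrow> (\<exists>i. cost c p \<mu> \<nu> i = -\<infinity>)"
  proof (intro ballI impI)
    fix \<nu> assume n: "\<nu> \<in> Pi2 V" and pr: "prolonging p \<mu> \<nu>"
    then obtain i where "cost c p \<mu> \<nu> i = \<infinity> \<or> cost c p \<mu> \<nu> i = -\<infinity>"
      using ssp m unfolding ssp_assumption_def by blast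
    moreover have "cost c p \<mu> \<nu> i < \<infinity>" using fin n by blast
    ultimately show "\<exists>i. cost c p \<mu> \<nu> i = -\<infinity>" by auto
  qed
qed

lemma ess2:
  assumes ssp: "ssp_assumption U V c p \<mu>b \<nu>b" and n: "\<nu> \<in> Pi2 V"
    and fin: "\<forall>\<mu>\<in>Pi1 U. \<forall>i. cost c p \<mu> \<nu> i > -\<infinity>"
  shows "ess_proper2 U V c p \<nu>"
  unfolding ess_proper2_def
proof
  have mb: "\<mu>b \<in> Pi1 U" using ssp by (simp add: ssp_assumption_def)
  have "\<not> prolonging p \<mu>b \<nu>"
  proof
    assume "prolonging p \<mu>b \<nu>"
    then obtain i where "cost c p \<mu>b \<nu> i = \<infinity> \<or> cost c p \<mu>b \<nu> i = -\<infinity>"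
      using ssp n mb unfolding ssp_assumption_def by blast
    moreover have "cost c p \<mu>b \<nu> i < \<infinity>" using ssp n unfolding ssp_assumption_def by blast
    moreover have "cost c p \<mu>b \<nu> i > -\<infinity>" using fin mb by blast
    ultimately show False by auto
  qed
  then show "\<exists>\<mu>\<in>Pi1 U. \<not> prolonging p \<mu> \<nu>" using mb by blast
next
  show "\<forall>\<mu>\<in>Pi1 U. prolonging p \<mu> \<nu> \<longrightarrow> (\<exists>i. cost c p \<mu> \<nu> i = \<infinity>)"
  proof (intro ballI impI)
    fix \<mu> assume m: "\<mu> \<in> Pi1 U" and pr: "prolonging p \<mu> \<nu>"
    then obtain i where "cost c p \<mu> \<nu> i = \<infinity> \<or> cost c p \<mu> \<nu> i = -\<infinity>"
      using ssp n unfolding ssp_assumption_def by blast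
    moreover have "cost c p \<mu> \<nu> i > -\<infinity>" using fin m by blast
    ultimately show "\<exists>i. cost c p \<mu> \<nu> i = \<infinity>" by auto
  qed
qed

theorem lemma2p3:
  fixes U :: "'s::finite \<Rightarrow> 'u::polish_space set"
    and V :: "'s \<Rightarrow> 'v::polish_space set"
    and c :: "'s \<Rightarrow> 'u \<Rightarrow> 'v \<Rightarrow> real"
    and p :: "'s \<Rightarrow> 's option \<Rightarrow> 'u \<Rightarrow> 'v \<Rightarrow> real"
    and \<mu>b \<mu> :: "'s \<Rightarrow> 'u" and \<nu>b \<nu> :: "'s \<Rightarrow> 'v"
  assumes "game_model U V c p"
    and "ssp_assumption U V c p \<mu>b \<nu>b"
    and "\<mu> \<in> Pi1 U" and "\<nu> \<in> Pi2 V"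
  shows "((\<exists>x::'s \<Rightarrow> real. \<forall>i. Tmu V c p \<mu> x i \<le> ereal (x i)) \<longrightarrow> ess_proper1 U V c p \<mu>)
       \<and> ((\<exists>x::'s \<Rightarrow> real. \<forall>i. ereal (x i) \<le> Tnu U c p \<nu> x i) \<longrightarrow> ess_proper2 U V c p \<nu>)
       \<and> ess_proper1 U V c p \<mu>b \<and> ess_proper2 U V c p \<nu>b"
proof (intro conjI impI)
  note gm = assms(1) and ssp = assms(2)
  show "ess_proper1 U V c p \<mu>"
    if "\<exists>x::'s \<Rightarrow> real. \<forall>i. Tmu V c p \<mu> x i \<le> ereal (x i)"
  proof -
    from that obtain x :: "'s \<Rightarrow> real" where x: "\<forall>i. Tmu V c p \<mu> x i \<le> ereal (x i)" by blast
    show ?thesis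
    proof (rule ess1[OF ssp assms(3)], intro ballI allI)
      fix \<nu>' i assume n: "\<nu>' \<in> Pi2 V"
      have T: "\<forall>i. Tmn c p \<mu> \<nu>' x i \<le> x i"
        using x n unfolding Tmu_def by (auto simp: SUP_le_iff)
      show "cost c p \<mu> \<nu>' i < \<infinity>"
        by (rule cost_lt[OF model_nn_row[OF gm assms(3) n] T])
    qed
  qed
  show "ess_proper2 U V c p \<nu>"
    if "\<exists>x::'s \<Rightarrow> real. \<forall>i. ereal (x i) \<le> Tnu U c p \<nu> x i"
  proof -
    from that obtain x :: "'s \<Rightarrow> real" where x: "\<forall>i. ereal (x i) \<le> Tnu U c p \<nu> x i" by blast
    show ?thesis
    proof (rule ess2[OF ssp assms(4)], intro ballI allI)
      fix \<mu>' i assume m: "\<mu>' \<in> Pi1 U"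
      have T: "\<forall>i. x i \<le> Tmn c p \<mu>' \<nu> x i"
        using x m unfolding Tnu_def by (auto simp: le_INF_iff)
      show "cost c p \<mu>' \<nu> i > -\<infinity>"
        by (rule cost_gt[OF model_nn_row[OF gm m assms(4)] T])
    qed
  qed
  show "ess_proper1 U V c p \<mu>b"
    by (rule ess1[OF ssp]) (use ssp in \<open>auto simp: ssp_assumption_def\<close>)
  show "ess_proper2 U V c p \<nu>b"
    by (rule ess2[OF ssp]) (use ssp in \<open>auto simp: ssp_assumption_def\<close>)
qed

end
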